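(* Let $m\ge 2$, $R>0$, $\alpha\le 0$, and $h\in C^2([0,\infty))$ with $h''(r)\ge 0$ on $(0,\infty)$. Let $\mu_1$ be the first eigenvalue of the problem $$w''+\Big(\frac{m-1}{r}+h'(r)\Big)w'+\Big(\lambda-\frac{m-1}{r^2}\Big)w=0\ \text{ in }(0,R),\qquad w(0)=0,\quad w'(R)+\alpha w(R)=0,$$ and let $g$ be a corresponding eigenfunction, chosen positive on $(0,R]$ with $g'(0)=1$. Then: (1) $g'(r)>0$ for all $r\in(0,R)$; (2) if in addition $\alpha\ge -\frac2R$, then $g'(r)\ge -\alpha g(r)$ for all $r\in(0,R]$.
   Context: $\mu_1$ admits the variational characterization $\mu_1=\inf\{\frac{\int_0^R(g'^2+\frac{m-1}{r^2}g^2)r^{m-1}e^{h(r)}dr+\alpha g(R)^2R^{m-1}e^{h(R)}}{\int_0^R g^2r^{m-1}e^{h(r)}dr}: g\in W^{1,2}((0,R)),\ g(0)=0\}$. *)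

theory Defs
  imports "HOL-Analysis.Analysis"
begin

text \<open>The function h enters only through its derivative h1.\<close>

definition sl_eigenpair ::
  "nat \<Rightarrow> (real \<Rightarrow> real) \<Rightarrow> real \<Rightarrow> real \<Rightarrow> real \<Rightarrow> (real \<Rightarrow> real) \<Rightarrow> (real \<Rightarrow> real) \<Rightarrow> bool" where
  "sl_eigenpair m h1 \<alpha> R lam w wd \<longleftrightarrow>
     (\<forall>r\<in>{0..R}. (w has_real_derivative wd r) (at r within {0..R})) \<and>
     (\<forall>r\<in>{0<..<R}. \<exists>wdd. (wd has_real_derivative wdd) (at r) \<and>
         wdd + ((real m - 1) / r + h1 r) * wd r + (lam - (real m - 1) / r\<^sup>2) * w r = 0) \<and>
     w 0 = 0 \<and> wd R + \<alpha> * w R = 0 \<and>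
     (\<exists>r\<in>{0..R}. w r \<noteq> 0)"

definition sl_eigenvalue :: "nat \<Rightarrow> (real \<Rightarrow> real) \<Rightarrow> real \<Rightarrow> real \<Rightarrow> real \<Rightarrow> bool" where
  "sl_eigenvalue m h1 \<alpha> R lam \<longleftrightarrow> (\<exists>w wd. sl_eigenpair m h1 \<alpha> R lam w wd)"

definition sl_first_eigenvalue :: "nat \<Rightarrow> (real \<Rightarrow> real) \<Rightarrow> real \<Rightarrow> real \<Rightarrow> real \<Rightarrow> bool" where
  "sl_first_eigenvalue m h1 \<alpha> R \<mu> \<longleftrightarrow>
     sl_eigenvalue m h1 \<alpha> R \<mu> \<and> (\<forall>lam. sl_eigenvalue m h1 \<alpha> R lam \<longrightarrow> \<mu> \<le> lam)"

end

theory Submission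
  imports Defs
begin

lemma mvt_real:
  fixes f f' :: "real \<Rightarrow> real"
  assumes "a < b" "continuous_on {a..b} f"
    "\<And>x. a < x \<Longrightarrow> x < b \<Longrightarrow> (f has_real_derivative f' x) (at x)"
  shows "\<exists>z. a < z \<and> z < b \<and> f b - f a = (b - a) * f' z"
proof -
  from MVT[OF assms(1,2)] obtain l z where
    "a < z" "z < b" "(f has_real_derivative l) (at z)" "f b - f a = (b - a) * l"
    using assms(3) real_differentiable_def by blast
  moreover have "l = f' z" using DERIV_unique calculation assms(3) by blast
  ultimately show ?thesis by blast
qed

lemma deriv_left_le:
  fixes f :: "real \<Rightarrow> real"
  assumes "(f has_real_derivative D) (at x within {a..x})" "a < x"
    "\<And>t. a \<le> t \<Longrightarrow> t < x \<Longrightarrow> f x \<le> f t"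
  shows "D \<le> 0"
proof -
  have lim: "((\<lambda>y. (f y - f x) / (y - x)) \<longlongrightarrow> D) (at_left x)"
    using assms(1) has_field_derivative_iff at_within_Icc_at_left[OF assms(2)] by metis
  have "\<forall>\<^sub>F y in at_left x. (f y - f x) / (y - x) \<le> 0"
    using eventually_at_left_real[OF assms(2)]
  proof (rule eventually_mono)
    fix y assume "y \<in> {a<..<x}"
    then have "f y - f x \<ge> 0" "y - x < 0" using assms(3) by auto
    then show "(f y - f x) / (y - x) \<le> 0" by (simp add: divide_nonneg_neg)
  qed
  then show ?thesis using tendsto_upperbound[OF lim] trivial_limit_at_left_real by blast
qed

lemma W_identity:
  fixes p a g g1 g2 g2' ap Qt Qtp :: real
  assumes "g2 = - a * g1 - Qt * g" "g2' = - ap * g1 - a * g2 - Qtp * g - Qt * g1"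
  shows "p * a * (g * g2 - g1^2) + p * (g1 * g2 + g * g2' - 2 * g1 * g2) = - p * (ap * g * g1 + Qtp * g^2)"
  unfolding assms(2) unfolding assms(1) by (simp add: algebra_simps power2_eq_square)

lemma exp_weight_deriv:
  fixes f :: "real \<Rightarrow> real"
  assumes "(f has_real_derivative f') (at x within S)"
  shows "((\<lambda>t. f t * exp (- (c * t))) has_real_derivative exp (- (c * x)) * (f' - c * f x)) (at x within S)"
  using assms
  by (auto intro!: derivative_eq_intros simp: algebra_simps)


theorem proposition2p2:
  fixes m :: nat and R \<alpha> \<mu> :: real
    and h h1 h2 g g1 :: "real \<Rightarrow> real"
  assumes "m \<ge> 2" and "R > 0" and "\<alpha> \<le> 0"
    and "\<forall>r\<ge>0. (h has_real_derivative h1 r) (at r within {0..})"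
    and "\<forall>r\<ge>0. (h1 has_real_derivative h2 r) (at r within {0..})"
    and "continuous_on {0..} h2"
    and "\<forall>r>0. h2 r \<ge> 0"
    and "sl_first_eigenvalue m h1 \<alpha> R \<mu>"
    and "sl_eigenpair m h1 \<alpha> R \<mu> g g1"
    and "\<forall>r\<in>{0<..R}. g r > 0"
    and "g1 0 = 1"
  shows "(\<forall>r\<in>{0<..<R}. g1 r > 0) \<and>
         (\<alpha> \<ge> - 2 / R \<longrightarrow> (\<forall>r\<in>{0<..R}. g1 r \<ge> - \<alpha> * g r))"
proof -
  have m1: "real m - 1 > 0" using assms(1) by simp
  define \<beta> where "\<beta> = - \<alpha>"
  have \<beta>0: "\<beta> \<ge> 0" using assms(3) by (simp add: \<beta>_def)
  have gpos: "\<And>t. 0 < t \<Longrightarrow> t \<le> R \<Longrightarrow> g t > 0" using assms(10) by auto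
  from assms(9) have
    gd: "\<forall>r\<in>{0..R}. (g has_real_derivative g1 r) (at r within {0..R})" and
    ode: "\<forall>r\<in>{0<..<R}. \<exists>wdd. (g1 has_real_derivative wdd) (at r) \<and>
         wdd + ((real m - 1) / r + h1 r) * g1 r + (\<mu> - (real m - 1) / r\<^sup>2) * g r = 0" and
    g0: "g 0 = 0" and bc: "g1 R + \<alpha> * g R = 0"
    unfolding sl_eigenpair_def by auto
  have bcR: "g1 R = \<beta> * g R" using bc by (simp add: \<beta>_def)
  define g2 where "g2 t = - ((real m - 1) / t + h1 t) * g1 t - (\<mu> - (real m - 1) / t\<^sup>2) * g t" for t
  have dg1: "(g1 has_real_derivative g2 t) (at t)" if "0 < t" "t < R" for t
  proof -
    have tin: "t \<in> {0<..<R}" using that by simp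
    from bspec[OF ode tin] obtain wdd where w1: "(g1 has_real_derivative wdd) (at t)"
      and w2: "wdd + ((real m - 1) / t + h1 t) * g1 t + (\<mu> - (real m - 1) / t\<^sup>2) * g t = 0" by blast
    have "wdd = g2 t" using w2 unfolding g2_def by (simp add: algebra_simps)
    then show ?thesis using w1 by simp
  qed
  have dg: "(g has_real_derivative g1 t) (at t)" if "0 < t" "t < R" for t
  proof -
    have "(g has_real_derivative g1 t) (at t within {0<..<R})"
      using gd that by (intro DERIV_subset[of g "g1 t" t "{0..R}" "{0<..<R}"]) auto
    then show ?thesis using at_within_open[of t "{0<..<R}"] that by simp
  qed
  have gcont: "continuous_on {0..R} g"
    using gd DERIV_continuous_on by blast
  have dh: "(h has_real_derivative h1 t) (at t)" if "0 < t" for t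
  proof -
    have "(h has_real_derivative h1 t) (at t within {0<..})"
      using assms(4) that by (intro DERIV_subset[of h "h1 t" t "{0..}" "{0<..}"]) auto
    then show ?thesis using at_within_open[of t "{0<..}"] that by simp
  qed
  have dh1: "(h1 has_real_derivative h2 t) (at t)" if "0 < t" for t
  proof -
    have "(h1 has_real_derivative h2 t) (at t within {0<..})"
      using assms(5) that by (intro DERIV_subset[of h1 "h2 t" t "{0..}" "{0<..}"]) auto
    then show ?thesis using at_within_open[of t "{0<..}"] that by simp
  qed
  define p where "p t = exp ((real m - 1) * ln t + h t)" for t
  have ppos: "p t > 0" for t unfolding p_def by simp
  have dp: "(p has_real_derivative p t * ((real m - 1) / t + h1 t)) (at t)" if "0 < t" for t
    unfolding p_def
    by (rule derivative_eq_intros refl dh that | simp add: that field_simps)+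
  have g1cont: "continuous_on {a..b} g1" if "0 < a" "b < R" for a b
    using that by (intro continuous_at_imp_continuous_on ballI DERIV_isCont[OF dg1]) auto
  have gcont': "continuous_on {a..b} g" if "0 \<le> a" "b \<le> R" for a b
    using that by (intro continuous_on_subset[OF gcont]) auto
  have pcont: "continuous_on {a..b} p" if "0 < a" for a b
    using that by (intro continuous_at_imp_continuous_on ballI DERIV_isCont[OF dp]) auto
  define Q where "Q t = (real m - 1) / t\<^sup>2 - \<mu>" for t
  define P where "P t = p t * g1 t" for t
  have dP: "(P has_real_derivative p t * Q t * g t) (at t)" if "0 < t" "t < R" for t
    unfolding P_def
    by (rule derivative_eq_intros dp dg1 that refl | simp add: that g2_def Q_def field_simps power2_eq_square)+
  have Pcont: "continuous_on {a..b} P" if "0 < a" "b < R" for a b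
    using that by (intro continuous_at_imp_continuous_on ballI DERIV_isCont[OF dP]) auto
  have Qmono: "Q t < Q s" if "0 < s" "s < t" for s t
  proof -
    have "s\<^sup>2 < t\<^sup>2" using that by (simp add: power_strict_mono)
    then have "(real m - 1) / t\<^sup>2 < (real m - 1) / s\<^sup>2"
      using m1 that by (intro divide_strict_left_mono) auto
    then show ?thesis unfolding Q_def by simp
  qed
  have part1: "g1 r > 0" if r: "0 < r" "r < R" for r
  proof (cases "Q r \<ge> 0")
    case True
    obtain \<xi> where \<xi>: "0 < \<xi>" "\<xi> < r" "g r - g 0 = (r - 0) * g1 \<xi>"
      using mvt_real[of 0 r g g1] gcont'[of 0 r] dg r by auto
    have g1\<xi>: "g1 \<xi> > 0" using \<xi> gpos[of r] g0 r by (simp add: zero_less_mult_iff)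
    obtain z where z: "\<xi> < z" "z < r" "P r - P \<xi> = (r - \<xi>) * (p z * Q z * g z)"
      using mvt_real[of \<xi> r P "\<lambda>t. p t * Q t * g t"] Pcont[of \<xi> r] dP \<xi> r by auto
    have "Q z > 0" using Qmono[of z r] True z \<xi> by simp
    then have "p z * Q z * g z > 0" using ppos gpos[of z] z \<xi> r by simp
    then have "(r - \<xi>) * (p z * Q z * g z) > 0" using z mult_pos_pos[of "r - \<xi>" "p z * Q z * g z"] by auto
    then have "P r > P \<xi>" using z by linarith
    moreover have "P \<xi> > 0" unfolding P_def using ppos g1\<xi> by simp
    ultimately have "P r > 0" by simp
    then show ?thesis unfolding P_def using ppos[of r] by (simp add: zero_less_mult_iff)
  next
    case False
    show ?thesis
    proof (rule ccontr)
      assume "\<not> g1 r > 0"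
      then have Pr: "P r \<le> 0" unfolding P_def using ppos[of r] by (simp add: mult_le_0_iff)
      have Pdec: "P b < P a" if ab: "r \<le> a" "a < b" "b < R" for a b
      proof -
        obtain z where z: "a < z" "z < b" "P b - P a = (b - a) * (p z * Q z * g z)"
          using mvt_real[of a b P "\<lambda>t. p t * Q t * g t"] Pcont[of a b] dP ab r by auto
        have "Q z < 0" using Qmono[of r z] False z ab r by simp
        then have "p z * Q z * g z < 0" using ppos[of z] gpos[of z] z ab r
          by (simp add: mult_pos_neg mult_neg_pos)
        then have "(b - a) * (p z * Q z * g z) < 0" using z mult_pos_neg[of "b - a" "p z * Q z * g z"] by auto
        then show ?thesis using z by linarith
      qed
      define r2 where "r2 = (r + R) / 2"
      have r2: "r < r2" "r2 < R" using r unfolding r2_def by auto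
      have Pr2: "P r2 < 0" using Pdec[of r r2] r2 Pr by simp
      obtain tm where tm: "tm \<in> {r2..R}" "\<forall>y\<in>{r2..R}. p y \<le> p tm"
        using continuous_attains_sup[of "{r2..R}" p] pcont[of r2 R] r2 r by auto
      define c where "c = - P r2 / p tm"
      have c0: "c > 0" unfolding c_def using Pr2 ppos[of tm] by (simp add: divide_neg_pos)
      have g1lt: "g1 t < - c" if "r2 < t" "t < R" for t
      proof -
        have "P t < P r2" using Pdec[of r2 t] that r2 by simp
        moreover have "P r2 \<le> (- c) * p t"
        proof -
          have "p t \<le> p tm" using tm that by auto
          then have "(- c) * p t \<ge> (- c) * p tm" using c0 by simp
          moreover have "(- c) * p tm = P r2" unfolding c_def using ppos[of tm] by simp
          ultimately show ?thesis by simp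
        qed
        ultimately have "g1 t * p t < (- c) * p t" unfolding P_def by (simp add: mult.commute)
        then show ?thesis using ppos[of t] mult_less_cancel_right_pos by blast
      qed
      define k where "k t = g t + t * c" for t
      have kge: "k R \<le> k t" if tt: "r2 \<le> t" "t < R" for t
      proof -
        have kc: "continuous_on {t..R} k" unfolding k_def
          using gcont'[of t R] tt r2 r by (intro continuous_intros) auto
        have kd: "(k has_real_derivative g1 x + c) (at x)" if xx: "t < x" "x < R" for x
        proof -
          have "(g has_real_derivative g1 x) (at x)" using dg xx tt r2 r by auto
          from DERIV_add[OF this DERIV_cmult_right[OF DERIV_ident, where c=c]]
          show ?thesis unfolding k_def by simp
        qed
        obtain z where z: "t < z" "z < R" "k R - k t = (R - t) * (g1 z + c)"
          using mvt_real[of t R k "\<lambda>t. g1 t + c", OF _ kc kd] tt by auto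
        have "(R - t) * (g1 z + c) < 0" using g1lt[of z] tt z mult_pos_neg[of "R - t" "g1 z + c"] by auto
        then show ?thesis using z by linarith
      qed
      have dk: "(k has_real_derivative g1 R + c) (at R within {r2..R})"
      proof -
        have gR: "(g has_real_derivative g1 R) (at R within {0..R})" using gd assms(2) by simp
        have sub: "{r2..R} \<subseteq> {0..R}" using r2 r by auto
        have "(g has_real_derivative g1 R) (at R within {r2..R})"
          using DERIV_subset[OF gR sub] .
        from DERIV_add[OF this DERIV_cmult_right[OF DERIV_ident, where c=c]]
        show ?thesis unfolding k_def by simp
      qed
      have "g1 R + c \<le> 0" using deriv_left_le[of k "g1 R + c" R r2, OF dk \<open>r2 < R\<close>] kge by blast
      moreover have "g1 R \<ge> 0" using bcR \<beta>0 gpos[of R] assms(2) by simp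
      ultimately show False using c0 by simp
    qed
  qed
  define w where "w t = g1 t / g t - \<beta>" for t
  define w' where "w' t = (g2 t * g t - g1 t * g1 t) / (g t)\<^sup>2" for t
  have dw: "(w has_real_derivative w' t) (at t)" if tt: "0 < t" "t < R" for t
  proof -
    have gt: "g t \<noteq> 0" using gpos[of t] tt by simp
    show ?thesis unfolding w_def w'_def
      by (rule derivative_eq_intros dg1 dg tt refl gt | simp add: gt field_simps power2_eq_square)+
  qed
  have wcont: "continuous_on {a..b} w" if "0 < a" "b < R" for a b
    using that by (intro continuous_at_imp_continuous_on ballI DERIV_isCont[OF dw]) auto
  define g2' where "g2' t = - (- (real m - 1) / t\<^sup>2 + h2 t) * g1 t - ((real m - 1) / t + h1 t) * g2 t
      - (2 * (real m - 1) / t ^ 3) * g t - (\<mu> - (real m - 1) / t\<^sup>2) * g1 t" for t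
  have dg2: "(g2 has_real_derivative g2' t) (at t)" if tt: "0 < t" "t < R" for t
  proof -
    have tne: "t \<noteq> 0" using tt by simp
    have dA: "((\<lambda>z. (real m - 1) / z + h1 z) has_real_derivative (- (real m - 1) / t\<^sup>2 + h2 t)) (at t)"
      by (rule derivative_eq_intros dh1[OF tt(1)] tne refl
          | simp add: tne field_simps power2_eq_square)+
    have dB: "((\<lambda>z. \<mu> - (real m - 1) / z\<^sup>2) has_real_derivative 2 * (real m - 1) / t ^ 3) (at t)"
      by (rule derivative_eq_intros tne refl
          | simp add: tne field_simps power2_eq_square power3_eq_cube)+
    have e: "g2 = (\<lambda>z. (- ((real m - 1) / z + h1 z)) * g1 z - (\<mu> - (real m - 1) / z\<^sup>2) * g z)"
      by (rule ext) (simp add: g2_def)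
    have "((\<lambda>z. (- ((real m - 1) / z + h1 z)) * g1 z - (\<mu> - (real m - 1) / z\<^sup>2) * g z) has_real_derivative
       (- (- (real m - 1) / t\<^sup>2 + h2 t)) * g1 t + g2 t * (- ((real m - 1) / t + h1 t))
        - (2 * (real m - 1) / t ^ 3 * g t + g1 t * (\<mu> - (real m - 1) / t\<^sup>2))) (at t)"
      by (intro DERIV_diff DERIV_mult DERIV_minus dA dB dg1[OF tt] dg[OF tt])
    then show ?thesis unfolding e[symmetric] g2'_def by (simp add: algebra_simps)
  qed
  define W where "W t = p t * (g t * g2 t - (g1 t)\<^sup>2)" for t
  define W' where "W' t = p t * ((real m - 1) / t\<^sup>2 * g t * g1 t - h2 t * g t * g1 t - 2 * (real m - 1) / t ^ 3 * (g t)\<^sup>2)" for t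
  have dW: "(W has_real_derivative W' t) (at t)" if tt: "0 < t" "t < R" for t
  proof -
    have raw: "(W has_real_derivative (p t * ((real m - 1) / t + h1 t)) * (g t * g2 t - (g1 t)\<^sup>2)
        + p t * (g1 t * g2 t + g t * g2' t - 2 * g1 t * g2 t)) (at t)"
      unfolding W_def
      by (rule derivative_eq_intros dg1 dg dg2 dp tt refl | simp add: algebra_simps power2_eq_square)+
    have "(p t * ((real m - 1) / t + h1 t)) * (g t * g2 t - (g1 t)\<^sup>2)
        + p t * (g1 t * g2 t + g t * g2' t - 2 * g1 t * g2 t)
        = - p t * ((- (real m - 1) / t\<^sup>2 + h2 t) * g t * g1 t + (2 * (real m - 1) / t ^ 3) * (g t)\<^sup>2)"
      by (rule W_identity[where Qt = "\<mu> - (real m - 1) / t\<^sup>2"]) (simp_all add: g2_def g2'_def)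
    also have "\<dots> = W' t" unfolding W'_def using tt by (simp add: field_simps)
    finally show ?thesis using raw by simp
  qed
  have Wcont: "continuous_on {a..b} W" if "0 < a" "b < R" for a b
    using that by (intro continuous_at_imp_continuous_on ballI DERIV_isCont[OF dW]) auto
  have Ww': "W t = p t * (g t)\<^sup>2 * w' t" if tt: "0 < t" "t < R" for t
  proof -
    have gt: "g t \<noteq> 0" using gpos[of t] tt by simp
    show ?thesis unfolding W_def w'_def using gt by (simp add: field_simps power2_eq_square)
  qed
  have part2: "g1 r \<ge> \<beta> * g r" if hb: "- 2 / R \<le> \<alpha>" and r: "0 < r" "r \<le> R" for r
  proof (cases "r = R")
    case True
    then show ?thesis using bcR by simp
  next
    case False
    with r have rR: "r < R" by simp
    have \<beta>2: "\<beta> \<le> 2 / R" using hb unfolding \<beta>_def by simp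
    have W'neg: "W' t < 0" if tt: "0 < t" "t < R" "w t \<le> 0" for t
    proof -
      have gt: "g t > 0" using gpos[of t] tt by simp
      have g1t: "g1 t > 0" using part1 tt by simp
      have "g1 t \<le> \<beta> * g t" using tt(3) gt unfolding w_def by (simp add: field_simps)
      also have "\<dots> \<le> 2 / R * g t" using mult_right_mono[OF \<beta>2, of "g t"] gt by simp
      also have "\<dots> < 2 / t * g t" using tt gt by (simp add: frac_less2)
      finally have lt: "g1 t < 2 / t * g t" .
      have c1: "(real m - 1) / t\<^sup>2 * g t > 0" using m1 gt tt by simp
      have "(real m - 1) / t\<^sup>2 * g t * g1 t < (real m - 1) / t\<^sup>2 * g t * (2 / t * g t)"
        using mult_strict_left_mono[OF lt c1] .
      also have "\<dots> = 2 * (real m - 1) / t ^ 3 * (g t)\<^sup>2" using tt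
        by (simp add: field_simps power2_eq_square power3_eq_cube)
      finally have "(real m - 1) / t\<^sup>2 * g t * g1 t < 2 * (real m - 1) / t ^ 3 * (g t)\<^sup>2" .
      moreover have "h2 t * g t * g1 t \<ge> 0" using assms(7) tt gt g1t by simp
      ultimately have "(real m - 1) / t\<^sup>2 * g t * g1 t - h2 t * g t * g1 t - 2 * (real m - 1) / t ^ 3 * (g t)\<^sup>2 < 0"
        by linarith
      then show ?thesis unfolding W'_def using ppos[of t] by (simp add: mult_pos_neg)
    qed
    show ?thesis
    proof (rule ccontr)
      assume "\<not> ?thesis"
      then have wr: "w r < 0" using gpos[of r] r unfolding w_def by (simp add: field_simps)
      have "\<exists>s. 0 < s \<and> s < r \<and> w s \<ge> 0"
      proof (rule ccontr)
        assume nos: "\<not> (\<exists>s. 0 < s \<and> s < r \<and> w s \<ge> 0)"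
        have neg: "g1 x < \<beta> * g x" if xx: "0 < x" "x < r" for x
        proof -
          have "\<not> w x \<ge> 0" using nos xx by blast
          then show ?thesis using gpos[of x] xx r unfolding w_def by (simp add: field_simps)
        qed
        define k where "k t = g t * exp (- (\<beta> * t))" for t
        have kc: "continuous_on {0..r} k" unfolding k_def
          using gcont'[of 0 r] r by (intro continuous_intros) auto
        have kd: "(k has_real_derivative exp (- (\<beta> * x)) * (g1 x - \<beta> * g x)) (at x)"
          if xx: "0 < x" "x < r" for x
          unfolding k_def using exp_weight_deriv[OF dg[of x]] xx r by simp
        obtain z where z: "0 < z" "z < r" "k r - k 0 = (r - 0) * (exp (- (\<beta> * z)) * (g1 z - \<beta> * g z))"
          using mvt_real[of 0 r k, OF _ kc kd] r by auto
        have "exp (- (\<beta> * z)) * (g1 z - \<beta> * g z) < 0"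
          using neg[of z] z by (simp add: mult_pos_neg)
        then have "(r - 0) * (exp (- (\<beta> * z)) * (g1 z - \<beta> * g z)) < 0"
          using r mult_pos_neg[of "r - 0"] by auto
        moreover have "k 0 = 0" unfolding k_def using g0 by simp
        moreover have "k r > 0" unfolding k_def using gpos[of r] r by simp
        ultimately show False using z by linarith
      qed
      then obtain s where s: "0 < s" "s < r" "w s \<ge> 0" by blast
      obtain t0 where t0: "t0 \<in> {s..r}" "\<forall>y\<in>{s..r}. w t0 \<le> w y"
        using continuous_attains_inf[of "{s..r}" w] wcont[of s r] s rR by auto
      have "w t0 \<le> w r" using t0(2) s by auto
      then have wt0: "w t0 < 0" using wr by simp
      have t0s: "s < t0" using t0 wt0 s by (cases "t0 = s") auto
      have t0r: "t0 \<le> r" using t0 by auto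
      have w't0: "w' t0 \<le> 0"
      proof (cases "t0 < r")
        case True
        have "w' t0 = 0"
        proof (rule DERIV_local_min[OF dw[of t0]])
          show "0 < t0" "t0 < R" using t0s s True rR by auto
          show "0 < min (t0 - s) (r - t0)" using t0s True by simp
          show "\<forall>y. \<bar>t0 - y\<bar> < min (t0 - s) (r - t0) \<longrightarrow> w t0 \<le> w y"
          proof (intro allI impI)
            fix y assume "\<bar>t0 - y\<bar> < min (t0 - s) (r - t0)"
            then have "y \<in> {s..r}" by (auto simp: abs_less_iff)
            then show "w t0 \<le> w y" using t0(2) by blast
          qed
        qed
        then show ?thesis by simp
      next
        case False
        then have t0eq: "t0 = r" using t0r by simp
        show ?thesis
        proof (rule ccontr)
          assume "\<not> w' t0 \<le> 0"
          then have pos: "w' r > 0" using t0eq by simp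
          obtain d where d: "d > 0" "\<forall>h>0. h < d \<longrightarrow> w (r - h) < w r"
            using DERIV_pos_inc_left[OF dw[of r] pos] r rR by auto
          define hh where "hh = min (d / 2) ((r - s) / 2)"
          have hh1: "hh \<le> (r - s) / 2" "hh \<le> d / 2" unfolding hh_def
            by (rule min.cobounded2, rule min.cobounded1)
          have hh2: "hh > 0" unfolding hh_def using d(1) s(2) by simp
          have hh3: "s \<le> r - hh" using hh1(1) s(2) by simp
          have hh: "hh > 0" "hh < d" "r - hh \<in> {s..r}" using hh1 hh2 hh3 d(1) by auto
          have "w (r - hh) < w r" using d hh by auto
          moreover have "w r \<le> w (r - hh)" using t0(2) hh t0eq by auto
          ultimately show False by simp
        qed
      qed
      have Wt0: "W t0 \<le> 0"
      proof -
        have "W t0 = p t0 * (g t0)\<^sup>2 * w' t0" using Ww'[of t0] t0s s t0r rR by simp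
        moreover have "p t0 * (g t0)\<^sup>2 \<ge> 0" using ppos[of t0] by simp
        ultimately show ?thesis using w't0 by (simp add: mult_nonneg_nonpos)
      qed
      have t0R: "0 < t0" "t0 < R" using t0s s t0r rR by auto
      have stepC: "w b < w t0" if bb: "t0 < b" "b < R" "\<forall>u. t0 \<le> u \<and> u < b \<longrightarrow> w u < 0" for b
      proof -
        have w'neg: "w' u < 0" if uu: "t0 < u" "u < b" for u
        proof -
          obtain z where z: "t0 < z" "z < u" "W u - W t0 = (u - t0) * W' z"
            using mvt_real[of t0 u W W', OF _ Wcont[of t0 u]] dW uu bb t0R by auto
          have zb: "t0 \<le> z \<and> z < b" using z(1,2) uu(2) by simp
          have wz: "w z < 0" using bb(3) zb by blast
          have "W' z < 0" using W'neg[of z] wz zb bb(2) t0R by simp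
          then have "(u - t0) * W' z < 0" using z mult_pos_neg[of "u - t0" "W' z"] by auto
          then have "W u < 0" using z Wt0 by linarith
          moreover have "W u = p u * (g u)\<^sup>2 * w' u" using Ww'[of u] uu bb t0R by simp
          moreover have "p u * (g u)\<^sup>2 > 0" using ppos[of u] gpos[of u] uu bb t0R by simp
          ultimately show ?thesis by (simp add: zero_less_mult_iff mult_less_0_iff)
        qed
        obtain z where z: "t0 < z" "z < b" "w b - w t0 = (b - t0) * w' z"
          using mvt_real[of t0 b w w', OF _ wcont[of t0 b]] dw bb t0R by auto
        have "(b - t0) * w' z < 0" using w'neg[of z] z mult_pos_neg[of "b - t0" "w' z"] by auto
        then show ?thesis using z by linarith
      qed
      have stepD: "w t \<le> w t0" if tt: "t0 \<le> t" "t < R" for t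
      proof (cases "t = t0")
        case True then show ?thesis by simp
      next
        case False
        then have tt0: "t0 < t" using tt by simp
        define Z where "Z = {u \<in> {t0..t}. 0 \<le> w u}"
        show ?thesis
        proof (cases "Z = {}")
          case True
          have "\<forall>u. t0 \<le> u \<and> u < t \<longrightarrow> w u < 0"
          proof (intro allI impI)
            fix u assume "t0 \<le> u \<and> u < t"
            then have uin: "u \<in> {t0..t}" by auto
            show "w u < 0"
            proof (rule ccontr)
              assume "\<not> w u < 0"
              then have "u \<in> Z" unfolding Z_def using uin by auto
              then show False using True by simp
            qed
          qed
          then show ?thesis using stepC[of t] tt0 tt by simp
        next
          case False
          have cl: "closed Z" unfolding Z_def
            using wcont[of t0 t] t0R tt by (intro continuous_on_closed_Collect_le continuous_intros) auto
          have bdd: "bdd_below Z" unfolding Z_def by (rule bdd_belowI[of _ t0]) auto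
          define b where "b = Inf Z"
          have bZ: "b \<in> Z" unfolding b_def using closed_contains_Inf[OF False bdd cl] .
          have bt0: "t0 < b" using bZ wt0 unfolding Z_def by (cases "b = t0") auto
          have bt: "b \<le> t" using bZ unfolding Z_def by auto
          have below: "\<forall>u. t0 \<le> u \<and> u < b \<longrightarrow> w u < 0"
          proof (intro allI impI)
            fix u assume uu: "t0 \<le> u \<and> u < b"
            show "w u < 0"
            proof (rule ccontr)
              assume "\<not> w u < 0"
              then have "u \<in> Z" unfolding Z_def using uu bt by auto
              then have "b \<le> u" unfolding b_def using cInf_lower[OF _ bdd] by blast
              then show False using uu by simp
            qed
          qed
          have "w b < w t0" using stepC[of b] bt0 bt tt below by simp
          moreover have "0 \<le> w b" using bZ unfolding Z_def by auto
          ultimately show ?thesis using wt0 by simp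
        qed
      qed
      define \<gamma> where "\<gamma> = \<beta> + w t0"
      define k where "k t = g t * exp (- (\<gamma> * t))" for t
      have kge: "k R \<le> k t" if tt: "t0 \<le> t" "t < R" for t
      proof -
        have kc: "continuous_on {t..R} k" unfolding k_def
          using gcont'[of t R] tt t0R by (intro continuous_intros) auto
        have kd: "(k has_real_derivative exp (- (\<gamma> * x)) * (g1 x - \<gamma> * g x)) (at x)"
          if xx: "t < x" "x < R" for x
          unfolding k_def using exp_weight_deriv[OF dg[of x]] xx tt t0R by simp
        obtain z where z: "t < z" "z < R" "k R - k t = (R - t) * (exp (- (\<gamma> * z)) * (g1 z - \<gamma> * g z))"
          using mvt_real[of t R k, OF _ kc kd] tt by auto
        have "w z \<le> w t0" using stepD[of z] z tt by simp
        then have "g1 z \<le> \<gamma> * g z" using gpos[of z] z tt t0R unfolding w_def \<gamma>_def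
          by (simp add: field_simps)
        then have "exp (- (\<gamma> * z)) * (g1 z - \<gamma> * g z) \<le> 0" by (simp add: mult_nonneg_nonpos)
        then have "(R - t) * (exp (- (\<gamma> * z)) * (g1 z - \<gamma> * g z)) \<le> 0"
          using z mult_nonneg_nonpos[of "R - t"] by auto
        then show ?thesis using z by linarith
      qed
      have gR: "(g has_real_derivative g1 R) (at R within {0..R})" using gd assms(2) by simp
      have sub: "{t0..R} \<subseteq> {0..R}" using t0R by auto
      have dk: "(k has_real_derivative exp (- (\<gamma> * R)) * (g1 R - \<gamma> * g R)) (at R within {t0..R})"
        unfolding k_def using exp_weight_deriv[OF DERIV_subset[OF gR sub]] by simp
      have "exp (- (\<gamma> * R)) * (g1 R - \<gamma> * g R) \<le> 0"
        using deriv_left_le[of k _ R t0, OF dk \<open>t0 < R\<close>] kge by blast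
      then have "g1 R \<le> \<gamma> * g R" by (simp add: mult_le_0_iff)
      then have "w t0 * g R \<ge> 0" using bcR unfolding \<gamma>_def by (simp add: algebra_simps)
      moreover have "w t0 * g R < 0" using wt0 gpos[of R] assms(2) by (simp add: mult_neg_pos)
      ultimately show False by simp
    qed
  qed
  show ?thesis using part1 part2 unfolding \<beta>_def by auto
qed
end
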